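(* Let $(C,\mathbf A)$, $C\in\mathcal L(\mathcal X,\mathcal Y)$, $\mathbf A=(A_1,\dots,A_d)\in\mathcal L(\mathcal X)^d$, be a contractive pair and let $Q$ be the orthogonal projection of $\mathcal X$ onto $(\operatorname{Ker}\widehat{\mathcal O}_{C,\mathbf A})^\perp$. Then $Q-A_1^*QA_1-\cdots-A_d^*QA_d\ge C^*C$ and $\mathcal G_{C,\mathbf A}\le Q\le I_{\mathcal X}$. Write, with respect to $\mathcal X=\operatorname{Ker}\widehat{\mathcal O}_{C,\mathbf A}\oplus(\operatorname{Ker}\widehat{\mathcal O}_{C,\mathbf A})^\perp$, $$C=\begin{bmatrix}0&C^0\end{bmatrix},\quad A_j=\begin{bmatrix}A_{j1}&A_{j2}\\0&A_j^0\end{bmatrix},\quad Q=\begin{bmatrix}0&0\\0&I\end{bmatrix}\quad(j=1,\dots,d).$$ Then $Q$ satisfies the Stein equation $Q-\sum_{j=1}^dA_j^*QA_j=C^*C$ if and only if $(C^0,\mathbf A^0)=(C^0,(A_1^0,\dots,A_d^0))$ is an isometric pair, in which case also $A_{j2}=0$ (so $(\operatorname{Ker}\widehat{\mathcal O}_{C,\mathbf A})^\perp$ is invariant for $A_j$) for $j=1,\dots,d$.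
   Context: $\mathcal F_d$: free semigroup of words on $\{1,\dots,d\}$; $\mathbf A^v=A_{i_N}\cdots A_{i_1}$ for $v=i_N\cdots i_1$; $\widehat{\mathcal O}_{C,\mathbf A}x=\sum_v(C\mathbf A^vx)z^v\in H^2_{\mathcal Y}(\mathcal F_d)$ (formal power series in noncommuting indeterminates with square-summable coefficients); $\mathcal G_{C,\mathbf A}=\widehat{\mathcal O}_{C,\mathbf A}^*\widehat{\mathcal O}_{C,\mathbf A}=\sum_v(\mathbf A^v)^*C^*C\mathbf A^v$. Contractive pair: $C^*C+\sum_jA_j^*A_j\le I$; isometric pair: equality. *)

theory Defs
  imports "HOL-Analysis.Analysis"
begin

text \<open>Operators are bounded linear maps between real Hilbert spaces
  (types of class real_inner + complete_space).  A d-tuple of operators is a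
  function A :: nat => ('a => 'a) used on the indices 1..d.\<close>

text \<open>Words of the free semigroup F_d: lists over {1..d}.  The list
  [i_N, ..., i_1] denotes the word v = i_N ... i_1, and
  A^v = A_{i_N} ... A_{i_1}; the empty word gives the identity.\<close>

definition words :: "nat \<Rightarrow> nat list set" where
  "words d = {v. set v \<subseteq> {1..d}}"

fun word_pow :: "(nat \<Rightarrow> 'a \<Rightarrow> 'a) \<Rightarrow> nat list \<Rightarrow> 'a \<Rightarrow> 'a" where
  "word_pow A [] = id"
| "word_pow A (i # v) = A i \<circ> word_pow A v"

definition adjoint_on :: "'a::real_inner set \<Rightarrow> ('a \<Rightarrow> 'b::real_inner) \<Rightarrow> 'b \<Rightarrow> 'a" where
  "adjoint_on M T y = (THE z. z \<in> M \<and> (\<forall>x\<in>M. inner (T x) y = inner x z))"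

definition adjoint :: "('a::real_inner \<Rightarrow> 'b::real_inner) \<Rightarrow> 'b \<Rightarrow> 'a" where
  "adjoint T = adjoint_on UNIV T"

definition op_le :: "('a::real_inner \<Rightarrow> 'a) \<Rightarrow> ('a \<Rightarrow> 'a) \<Rightarrow> bool" where
  "op_le S T \<longleftrightarrow> (\<forall>x. inner (S x) x \<le> inner (T x) x)"

definition contractive_pair ::
  "('a::{real_inner,complete_space} \<Rightarrow> 'b::{real_inner,complete_space}) \<Rightarrow> (nat \<Rightarrow> 'a \<Rightarrow> 'a) \<Rightarrow> nat \<Rightarrow> bool" where
  "contractive_pair C A d \<longleftrightarrow> bounded_linear C \<and> (\<forall>j\<in>{1..d}. bounded_linear (A j)) \<and>
     op_le (\<lambda>x. adjoint C (C x) + (\<Sum>j=1..d. adjoint (A j) (A j x))) id"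

text \<open>Isometric pair of operators C : M -> Y, A_j : M -> M on a closed
  subspace M of X (regarded as a Hilbert space in its own right):
  C^*C + sum A_j^*A_j = I_M, the adjoints being taken in M.\<close>

definition isometric_pair_on ::
  "'a::{real_inner,complete_space} set \<Rightarrow> ('a \<Rightarrow> 'b::{real_inner,complete_space}) \<Rightarrow> (nat \<Rightarrow> 'a \<Rightarrow> 'a) \<Rightarrow> nat \<Rightarrow> bool" where
  "isometric_pair_on M C A d \<longleftrightarrow>
     (\<forall>j\<in>{1..d}. \<forall>x\<in>M. A j x \<in> M) \<and>
     (\<forall>x\<in>M. adjoint_on M C (C x) + (\<Sum>j=1..d. adjoint_on M (A j) (A j x)) = x)"

text \<open>Observability operator: x |-> sum_v (C A^v x) z^v, represented by its
  coefficient family indexed by words (0 outside the words over {1..d}).\<close>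

definition obs_op :: "('a \<Rightarrow> 'b::zero) \<Rightarrow> (nat \<Rightarrow> 'a \<Rightarrow> 'a) \<Rightarrow> nat \<Rightarrow> 'a \<Rightarrow> nat list \<Rightarrow> 'b" where
  "obs_op C A d x = (\<lambda>v. if v \<in> words d then C (word_pow A v x) else 0)"

definition obs_kernel :: "('a \<Rightarrow> 'b::zero) \<Rightarrow> (nat \<Rightarrow> 'a \<Rightarrow> 'a) \<Rightarrow> nat \<Rightarrow> 'a set" where
  "obs_kernel C A d = {x. obs_op C A d x = (\<lambda>v. 0)}"

definition gramian ::
  "('a::{real_inner,complete_space} \<Rightarrow> 'b::{real_inner,complete_space}) \<Rightarrow> (nat \<Rightarrow> 'a \<Rightarrow> 'a) \<Rightarrow> nat \<Rightarrow> 'a \<Rightarrow> 'a" where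
  "gramian C A d x = (\<Sum>\<^sub>\<infinity>v\<in>words d. adjoint (word_pow A v) (adjoint C (C (word_pow A v x))))"

definition orth_proj :: "'a::real_inner set \<Rightarrow> ('a \<Rightarrow> 'a) \<Rightarrow> bool" where
  "orth_proj M P \<longleftrightarrow> (\<forall>x. P x \<in> M \<and> (\<forall>m\<in>M. inner (x - P x) m = 0))"

end

theory Submission
  imports Defs
begin


lemma quad_zero:
  fixes b c :: real
  assumes "\<And>t. 0 \<le> - 2 * t * b + t^2 * c" and "c \<ge> 0"
  shows "b = 0"
proof -
  have h: "0 \<le> - 2 * (b/(c+1)) * b + (b/(c+1))^2 * c" using assms(1) .
  have c1: "c + 1 > 0" using assms(2) by simp
  have "- 2 * (b/(c+1)) * b + (b/(c+1))^2 * c = - (b^2 * (c + 2)) / (c+1)^2"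
    using c1 by (simp add: power_divide divide_simps) (simp add: algebra_simps power2_eq_square)
  with h have "0 \<le> - (b^2 * (c + 2)) / (c+1)^2" by simp
  hence "b^2 * (c + 2) / (c+1)^2 \<le> 0" by simp
  hence "b^2 * (c + 2) \<le> 0" using c1 by (simp add: divide_le_0_iff)
  moreover have "c + 2 > 0" using assms(2) by simp
  ultimately have "b^2 \<le> 0" by (simp add: mult_le_0_iff)
  thus ?thesis by simp
qed

lemma parallelogram:
  fixes x y :: "'a::real_inner"
  shows "norm (x - y)^2 + norm (x + y)^2 = 2 * norm x ^2 + 2 * norm y ^2"
  by (simp add: power2_norm_eq_inner inner_simps algebra_simps)

lemma proj_exists:
  fixes a :: "'a::{real_inner,complete_space}"
  assumes cl: "closed N" and sub: "subspace N"
  shows "\<exists>p\<in>N. \<forall>n\<in>N. inner (a - p) n = 0"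
proof -
  define S where "S = (\<lambda>n. norm (a - n)^2) ` N"
  define \<delta> where "\<delta> = Inf S"
  have N0: "0 \<in> N" using sub by (simp add: subspace_0)
  have Sne: "S \<noteq> {}" using N0 by (auto simp: S_def)
  have Sbdd: "bdd_below S" unfolding S_def by (rule bdd_belowI[of _ 0]) auto
  have low: "\<delta> \<le> norm (a - n)^2" if "n \<in> N" for n
    unfolding \<delta>_def S_def using Sbdd that by (auto simp: S_def intro: cInf_lower)
  have "\<exists>n\<in>N. norm (a - n)^2 < \<delta> + 1 / real (Suc k)" for k
  proof -
    have "Inf S < \<delta> + 1 / real (Suc k)" by (simp add: \<delta>_def)
    then obtain s where "s \<in> S" "s < \<delta> + 1 / real (Suc k)"
      using cInf_lessD[OF Sne] by blast
    thus ?thesis by (auto simp: S_def)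
  qed
  then obtain n where nN: "\<And>k. n k \<in> N" and nlt: "\<And>k. norm (a - n k)^2 < \<delta> + 1 / real (Suc k)"
    by metis
  have dist_bound: "norm (n k - n l)^2 \<le> 2 / real (Suc k) + 2 / real (Suc l)" for k l
  proof -
    have mid: "(1/2) *\<^sub>R (n k + n l) \<in> N"
      using nN sub by (simp add: subspace_add subspace_scale)
    have "(a - n k) + (a - n l) = 2 *\<^sub>R (a - (1/2) *\<^sub>R (n k + n l))"
      by (simp add: scaleR_right_diff_distrib scaleR_2)
    hence "norm ((a - n k) + (a - n l)) = norm (2 *\<^sub>R (a - (1/2) *\<^sub>R (n k + n l)))"
      by simp
    also have "\<dots> = 2 * norm (a - (1/2) *\<^sub>R (n k + n l))" by simp
    finally have "norm ((a - n k) + (a - n l))^2 = 4 * norm (a - (1/2) *\<^sub>R (n k + n l))^2"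
      by (simp add: power2_eq_square)
    moreover have "\<delta> \<le> norm (a - (1/2) *\<^sub>R (n k + n l))^2" using low mid by blast
    moreover have "norm (n k - n l)^2 + norm ((a - n k) + (a - n l))^2
        = 2 * norm (a - n k)^2 + 2 * norm (a - n l)^2"
    proof -
      have "(a - n k) - (a - n l) = -(n k - n l)" by simp
      hence "norm ((a - n k) - (a - n l)) = norm (n k - n l)" by (simp only: norm_minus_cancel)
      thus ?thesis using parallelogram[of "a - n k" "a - n l"] by simp
    qed
    ultimately show ?thesis using nlt[of k] nlt[of l] by linarith
  qed
  have "Cauchy n"
  proof (rule metric_CauchyI)
    fix e :: real assume e: "e > 0"
    obtain K where K: "4 / e^2 < real K" using reals_Archimedean2 by blast
    have eK: "4 / real (Suc K) < e^2"
    proof -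
      have "4 < e^2 * real K" using K e by (simp add: field_simps)
      also have "\<dots> \<le> e^2 * real (Suc K)" using e by simp
      finally show ?thesis by (simp add: field_simps)
    qed
    show "\<exists>M. \<forall>m\<ge>M. \<forall>k\<ge>M. dist (n m) (n k) < e"
    proof (intro exI allI impI)
      fix k l assume kl: "K \<le> k" "K \<le> l"
      have "2 / real (Suc k) \<le> 2 / real (Suc K)" using kl by (simp add: frac_le)
      moreover have "2 / real (Suc l) \<le> 2 / real (Suc K)" using kl by (simp add: frac_le)
      ultimately have "norm (n k - n l)^2 < e^2" using dist_bound[of k l] eK by linarith
      hence "norm (n k - n l) < e" using e by (simp add: power_less_imp_less_base)
      thus "dist (n k) (n l) < e" by (simp add: dist_norm)
    qed
  qed
  then obtain p where lim: "n \<longlonglongrightarrow> p" using Cauchy_convergent convergent_def by blast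
  have pN: "p \<in> N" using closed_sequentially[OF cl nN lim] .
  have lim2: "(\<lambda>k. norm (a - n k)^2) \<longlonglongrightarrow> norm (a - p)^2"
    by (intro tendsto_intros lim)
  have lim3: "(\<lambda>k. \<delta> + 1 / real (Suc k)) \<longlonglongrightarrow> \<delta> + 0"
    by (intro tendsto_intros LIMSEQ_inverse_real_of_nat[unfolded inverse_eq_divide])
  have pmin: "norm (a - p)^2 \<le> \<delta>"
    using LIMSEQ_le[OF lim2 lim3] nlt less_imp_le by auto
  show ?thesis
  proof (intro bexI[OF _ pN] ballI)
    fix m assume mN: "m \<in> N"
    have "0 \<le> - 2 * t * inner (a - p) m + t^2 * (norm m ^2)" for t
    proof -
      have "p + t *\<^sub>R m \<in> N" using pN mN sub by (simp add: subspace_add subspace_scale)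
      hence "norm (a - p)^2 \<le> norm (a - (p + t *\<^sub>R m))^2" using low[of "p + t *\<^sub>R m"] pmin by linarith
      also have "norm (a - (p + t *\<^sub>R m))^2 = norm (a - p)^2 - 2 * t * inner (a - p) m + t^2 * norm m ^2"
        unfolding power2_norm_eq_inner by (simp add: inner_simps algebra_simps power2_eq_square inner_commute)
      finally show ?thesis by simp
    qed
    thus "inner (a - p) m = 0" by (rule quad_zero) simp
  qed
qed



lemma perp_zero:
  fixes w :: "'a::real_inner"
  assumes "w \<in> M" "\<And>m. m \<in> M \<Longrightarrow> inner w m = 0"
  shows "w = 0"
  using assms(2)[OF assms(1)] by simp

lemma riesz:
  fixes f :: "'a::{real_inner,complete_space} \<Rightarrow> real"
  assumes bl: "bounded_linear f"
  shows "\<exists>z. \<forall>x. f x = inner x z"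
proof (cases "\<forall>x. f x = 0")
  case True thus ?thesis by (intro exI[of _ 0]) simp
next
  case False
  then obtain a where fa: "f a \<noteq> 0" by blast
  interpret f: bounded_linear f by fact
  define N where "N = {x. f x = 0}"
  have cl: "closed N" unfolding N_def
    by (intro closed_Collect_eq continuous_on_const f.continuous_on continuous_on_id)
  have sub: "subspace N" unfolding N_def subspace_def by (simp add: f.add f.scale f.zero)
  obtain p where pN: "p \<in> N" and po: "\<And>n. n \<in> N \<Longrightarrow> inner (a - p) n = 0"
    using proj_exists[OF cl sub, of a] by blast
  define u where "u = a - p"
  have fu: "f u = f a" using pN by (simp add: u_def N_def f.diff)
  hence u0: "u \<noteq> 0" using fa by auto
  have uu: "inner u u > 0" using u0 by simp
  show ?thesis
  proof (intro exI[of _ "(f u / inner u u) *\<^sub>R u"] allI)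
    fix x
    have "x - (f x / f u) *\<^sub>R u \<in> N" using fu fa by (simp add: N_def f.diff f.scale)
    hence "inner u (x - (f x / f u) *\<^sub>R u) = 0" using po u_def by blast
    hence "inner u x = (f x / f u) * inner u u" by (simp add: inner_simps)
    thus "f x = inner x ((f u / inner u u) *\<^sub>R u)"
      using fu fa uu by (simp add: inner_commute field_simps)
  qed
qed

lemma adjoint_on_eq:
  assumes sub: "subspace M" and zM: "z \<in> M" and z: "\<And>x. x \<in> M \<Longrightarrow> inner (T x) y = inner x z"
  shows "adjoint_on M T y = z"
  unfolding adjoint_on_def
proof (rule the_equality)
  show "z \<in> M \<and> (\<forall>x\<in>M. inner (T x) y = inner x z)" using zM z by blast
next
  fix z' assume h: "z' \<in> M \<and> (\<forall>x\<in>M. inner (T x) y = inner x z')"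
  have "z' - z \<in> M" using h zM sub by (simp add: subspace_diff)
  moreover have "inner m (z' - z) = 0" if "m \<in> M" for m using h z that by (simp add: inner_simps)
  ultimately have "inner (z' - z) (z' - z) = 0" by blast
  thus "z' = z" by simp
qed

lemma adj:
  fixes T :: "'a::{real_inner,complete_space} \<Rightarrow> 'b::real_inner"
  assumes "bounded_linear T"
  shows "inner (T x) y = inner x (adjoint T y)"
proof -
  have "bounded_linear (\<lambda>x. inner (T x) y)"
    using bounded_linear_compose[OF bounded_linear_inner_left assms] by simp
  then obtain z where z: "\<And>x. inner (T x) y = inner x z" using riesz by blast
  have "adjoint T y = z" unfolding adjoint_def
    by (rule adjoint_on_eq) (auto simp: z)
  thus ?thesis using z by simp
qed

lemma adj_linear:
  fixes T :: "'a::{real_inner,complete_space} \<Rightarrow> 'b::real_inner"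
  assumes "bounded_linear T"
  shows "linear (adjoint T)"
proof (rule linearI)
  fix y1 y2
  have "inner w (adjoint T (y1 + y2) - (adjoint T y1 + adjoint T y2)) = 0" for w
    using adj[OF assms, symmetric] by (simp add: inner_simps)
  from this[of "adjoint T (y1 + y2) - (adjoint T y1 + adjoint T y2)"]
  show "adjoint T (y1 + y2) = adjoint T y1 + adjoint T y2" by simp
next
  fix c and y
  have "inner w (adjoint T (c *\<^sub>R y) - c *\<^sub>R adjoint T y) = 0" for w
    using adj[OF assms, symmetric] by (simp add: inner_simps)
  from this[of "adjoint T (c *\<^sub>R y) - c *\<^sub>R adjoint T y"]
  show "adjoint T (c *\<^sub>R y) = c *\<^sub>R adjoint T y" by simp
qed

locale oproj =
  fixes M :: "'a::{real_inner,complete_space} set" and Q :: "'a \<Rightarrow> 'a"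
  assumes sub: "subspace M" and op: "orth_proj M Q"
begin

lemma in_M: "Q x \<in> M" using op by (simp add: orth_proj_def)
lemma orth: "m \<in> M \<Longrightarrow> inner (x - Q x) m = 0" using op by (simp add: orth_proj_def)
lemma inner_M: "m \<in> M \<Longrightarrow> inner (Q x) m = inner x m"
  using orth[of m x] by (simp add: inner_simps)
lemma sym: "inner (Q u) y = inner u (Q y)"
proof -
  have "inner (Q u) y = inner y (Q u)" by (simp add: inner_commute)
  also have "\<dots> = inner (Q y) (Q u)" using inner_M[OF in_M, of y u] by simp
  also have "\<dots> = inner u (Q y)" using inner_M[OF in_M, of u y] by (simp add: inner_commute)
  finally show ?thesis .
qed
lemma fix_M: "m \<in> M \<Longrightarrow> Q m = m"
proof -
  assume m: "m \<in> M"
  have "m - Q m \<in> M" using m in_M sub by (simp add: subspace_diff)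
  moreover have "\<And>n. n \<in> M \<Longrightarrow> inner (m - Q m) n = 0" using orth by blast
  ultimately show ?thesis using perp_zero by fastforce
qed
lemma idem: "Q (Q x) = Q x" using fix_M[OF in_M] .
lemma lin: "linear Q"
proof (rule linearI)
  fix x y
  have "Q (x + y) - (Q x + Q y) \<in> M" using in_M sub by (simp add: subspace_diff subspace_add)
  moreover have "inner (Q (x + y) - (Q x + Q y)) m = 0" if "m \<in> M" for m
    using inner_M[OF that] by (simp add: inner_simps)
  ultimately show "Q (x + y) = Q x + Q y" using perp_zero by fastforce
next
  fix c x
  have "Q (c *\<^sub>R x) - c *\<^sub>R Q x \<in> M" using in_M sub by (simp add: subspace_diff subspace_scale)
  moreover have "inner (Q (c *\<^sub>R x) - c *\<^sub>R Q x) m = 0" if "m \<in> M" for m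
    using inner_M[OF that] by (simp add: inner_simps)
  ultimately show "Q (c *\<^sub>R x) = c *\<^sub>R Q x" using perp_zero by fastforce
qed
lemma inner_self: "inner (Q u) u = norm (Q u)^2"
  using inner_M[OF in_M, of u u] by (simp add: inner_commute power2_norm_eq_inner)
lemma pyth: "norm (Q u)^2 + norm (u - Q u)^2 = norm u ^2"
proof -
  have "inner (u - Q u) (Q u) = 0" using orth[OF in_M] .
  thus ?thesis unfolding power2_norm_eq_inner by (simp add: inner_simps inner_commute)
qed
lemma norm_le: "norm (Q u)^2 \<le> norm u ^2"
proof -
  have "0 \<le> norm (u - Q u)^2" by simp
  thus ?thesis using pyth[of u] by linarith
qed
lemma adjoint_on_Q:
  fixes T :: "'a \<Rightarrow> 'b::real_inner"
  assumes "bounded_linear T"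
  shows "adjoint_on M T y = Q (adjoint T y)"
proof (rule adjoint_on_eq[OF sub in_M])
  fix x assume x: "x \<in> M"
  have "inner (T x) y = inner x (adjoint T y)" by (rule adj[OF assms])
  also have "\<dots> = inner (Q (adjoint T y)) x" using inner_M[OF x] by (simp add: inner_commute)
  finally show "inner (T x) y = inner x (Q (adjoint T y))" by (simp add: inner_commute)
qed
lemma adjoint_on_QT:
  fixes T :: "'a \<Rightarrow> 'a"
  assumes "bounded_linear T"
  shows "adjoint_on M (\<lambda>x. Q (T x)) y = Q (adjoint T (Q y))"
proof (rule adjoint_on_eq[OF sub in_M])
  fix x assume "x \<in> M"
  have "inner (Q (T x)) y = inner (T x) (Q y)" by (rule sym)
  also have "\<dots> = inner x (adjoint T (Q y))" by (rule adj[OF assms])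
  also have "\<dots> = inner x (Q (adjoint T (Q y)))" using inner_M[OF \<open>x \<in> M\<close>] by (simp add: inner_commute)
  finally show "inner (Q (T x)) y = inner x (Q (adjoint T (Q y)))" .
qed
end

lemma perp_perp:
  fixes K :: "'a::{real_inner,complete_space} set"
  assumes cl: "closed K" and sub: "subspace K"
  shows "orthogonal_comp (orthogonal_comp K) \<subseteq> K"
proof
  fix y assume y: "y \<in> orthogonal_comp (orthogonal_comp K)"
  obtain p where pK: "p \<in> K" and po: "\<And>n. n \<in> K \<Longrightarrow> inner (y - p) n = 0"
    using proj_exists[OF cl sub, of y] by blast
  have r: "y - p \<in> orthogonal_comp K" using po
    by (simp add: orthogonal_comp_def orthogonal_def inner_commute)
  have "inner (y - p) y = 0" using y r by (simp add: orthogonal_comp_def orthogonal_def)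
  moreover have "inner (y - p) p = 0" using po pK by blast
  ultimately have "inner (y - p) (y - p) = 0" by (simp add: inner_simps)
  hence "y = p" by simp
  thus "y \<in> K" using pK by simp
qed



lemma adj_swap:
  fixes T :: "'a::{real_inner,complete_space} \<Rightarrow> 'b::real_inner"
  assumes "bounded_linear T"
  shows "inner (adjoint T y) x = inner (T x) y"
  using adj[OF assms, of x y] by (simp add: inner_commute)

lemma adj_self:
  fixes T :: "'a::{real_inner,complete_space} \<Rightarrow> 'b::real_inner"
  assumes "bounded_linear T"
  shows "inner (adjoint T (T x)) x = norm (T x)^2"
  using adj_swap[OF assms] by (simp add: power2_norm_eq_inner)

lemma word_pow_append: "word_pow A (v @ w) = word_pow A v \<circ> word_pow A w"
  by (induction v) auto

lemma word_pow_bl: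
  assumes "\<And>j. j \<in> {1..d} \<Longrightarrow> bounded_linear (A j)" and "v \<in> words d"
  shows "bounded_linear (word_pow A v)"
  using assms(2)
proof (induction v)
  case Nil thus ?case by (simp add: id_def bounded_linear_ident)
next
  case (Cons i v)
  hence "i \<in> {1..d}" "v \<in> words d" by (auto simp: words_def)
  thus ?case using Cons.IH assms(1)
    by (simp add: o_def bounded_linear_compose)
qed

lemma psd_zero:
  fixes D :: "'a::real_inner \<Rightarrow> 'a"
  assumes lin: "linear D" and sym: "\<And>x y. inner (D x) y = inner x (D y)"
    and pos: "\<And>x. inner (D x) x \<ge> 0" and m: "inner (D m) m = 0"
  shows "D m = 0"
proof -
  interpret D: linear D by fact
  define y where "y = D m"
  have "0 \<le> - 2 * t * inner (D m) y + t^2 * inner (D y) y" for t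
  proof -
    have "0 \<le> inner (D (m - t *\<^sub>R y)) (m - t *\<^sub>R y)" by (rule pos)
    also have "\<dots> = inner (D m) m - t * inner (D m) y - t * inner (D y) m + t^2 * inner (D y) y"
      by (simp add: D.diff D.scale inner_simps power2_eq_square algebra_simps)
    also have "inner (D y) m = inner (D m) y" using sym[of y m] by (simp add: inner_commute)
    finally show ?thesis using m by simp
  qed
  hence "inner (D m) y = 0" by (rule quad_zero) (rule pos)
  thus ?thesis by (simp add: y_def)
qed

locale psetup =
  fixes C :: "'a::{real_inner,complete_space} \<Rightarrow> 'b::{real_inner,complete_space}"
    and A :: "nat \<Rightarrow> 'a \<Rightarrow> 'a" and d :: nat and Q :: "'a \<Rightarrow> 'a"
  assumes contr: "contractive_pair C A d"
    and Qp: "orth_proj (orthogonal_comp (obs_kernel C A d)) Q"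
begin

abbreviation "K \<equiv> obs_kernel C A d"
abbreviation "M \<equiv> orthogonal_comp K"

lemma blC: "bounded_linear C" using contr by (simp add: contractive_pair_def)
lemma blA: "j \<in> {1..d} \<Longrightarrow> bounded_linear (A j)" using contr by (simp add: contractive_pair_def)
lemma blW: "v \<in> words d \<Longrightarrow> bounded_linear (word_pow A v)" using word_pow_bl blA by blast

lemma contr_ineq: "norm (C x)^2 + (\<Sum>j=1..d. norm (A j x)^2) \<le> norm x ^2"
proof -
  have "inner (adjoint C (C x) + (\<Sum>j=1..d. adjoint (A j) (A j x))) x \<le> inner x x"
    using contr by (simp add: contractive_pair_def op_le_def)
  moreover have "inner (adjoint C (C x) + (\<Sum>j=1..d. adjoint (A j) (A j x))) x
     = norm (C x)^2 + (\<Sum>j=1..d. norm (A j x)^2)"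
    by (simp add: inner_add_left inner_sum_left adj_self[OF blC] adj_self[OF blA])
  ultimately show ?thesis by (simp add: power2_norm_eq_inner)
qed

lemma memK: "x \<in> K \<longleftrightarrow> (\<forall>v\<in>words d. C (word_pow A v x) = 0)"
  by (auto simp: obs_kernel_def obs_op_def fun_eq_iff)

lemma nil_words: "[] \<in> words d" by (simp add: words_def)

lemma subK: "subspace K"
proof -
  have "K = {x. \<forall>v\<in>words d. C (word_pow A v x) = 0}" using memK by blast
  moreover have "subspace {x. \<forall>v\<in>words d. C (word_pow A v x) = 0}"
  proof -
    have lw: "v \<in> words d \<Longrightarrow> bounded_linear (\<lambda>x. C (word_pow A v x))" for v
      using bounded_linear_compose[OF blC blW] by blast
    show ?thesis unfolding subspace_def
      using linear_add[OF bounded_linear.linear[OF lw]] linear_scale[OF bounded_linear.linear[OF lw]]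
        linear_0[OF bounded_linear.linear[OF lw]]
      by auto
  
  qed
  ultimately show ?thesis by simp
qed

lemma closedK: "closed K"
proof -
  have "K = (\<Inter>v\<in>words d. {x. C (word_pow A v x) = 0})" using memK by blast
  moreover have "closed {x. C (word_pow A v x) = 0}" if "v \<in> words d" for v
    by (intro closed_Collect_eq continuous_on_const
        bounded_linear.continuous_on[OF bounded_linear_compose[OF blC blW[OF that]] continuous_on_id])
  ultimately show ?thesis by auto
qed

lemma subM: "subspace M" by (rule subspace_orthogonal_comp)

sublocale P: oproj M Q using subM Qp by unfold_locales

lemma C_K: "k \<in> K \<Longrightarrow> C k = 0" using memK nil_words by fastforce

lemma A_K: "j \<in> {1..d} \<Longrightarrow> k \<in> K \<Longrightarrow> A j k \<in> K"
proof -
  assume j: "j \<in> {1..d}" and k: "k \<in> K"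
  { fix v assume v: "v \<in> words d"
    have "v @ [j] \<in> words d" using v j by (simp add: words_def)
    hence "C (word_pow A (v @ [j]) k) = 0" using k memK by blast
    hence "C (word_pow A v (A j k)) = 0" by (simp add: word_pow_append) }
  thus ?thesis using memK by blast
qed

lemma Q_K: "k \<in> K \<Longrightarrow> Q k = 0"
proof -
  assume k: "k \<in> K"
  have "Q k \<in> M" by (rule P.in_M)
  hence "inner k (Q k) = 0" using k by (simp add: orthogonal_comp_def orthogonal_def)
  hence "norm (Q k)^2 = 0" using P.inner_self[of k] by (simp add: inner_commute)
  thus ?thesis by simp
qed

lemma res_K: "x - Q x \<in> K"
proof -
  have "x - Q x \<in> orthogonal_comp M"
    using P.orth by (simp add: orthogonal_comp_def orthogonal_def inner_commute)
  thus ?thesis using perp_perp[OF closedK subK] by blast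
qed

lemma C_Q: "C x = C (Q x)"
proof -
  have "C x = C (x - Q x) + C (Q x)" using linear_add[OF bounded_linear.linear[OF blC]]
    by (metis diff_add_cancel)
  thus ?thesis using C_K[OF res_K] by simp
qed

lemma QA_Q: "j \<in> {1..d} \<Longrightarrow> Q (A j x) = Q (A j (Q x))"
proof -
  assume j: "j \<in> {1..d}"
  have "A j x = A j (x - Q x) + A j (Q x)" using linear_add[OF bounded_linear.linear[OF blA[OF j]]]
    by (metis diff_add_cancel)
  hence "Q (A j x) = Q (A j (x - Q x)) + Q (A j (Q x))" using linear_add[OF P.lin] by metis
  thus ?thesis using Q_K[OF A_K[OF j res_K]] by simp
qed

lemma cl1: "norm (C x)^2 + (\<Sum>j=1..d. norm (Q (A j x))^2) \<le> norm (Q x)^2"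
proof -
  have "norm (C x)^2 + (\<Sum>j=1..d. norm (Q (A j x))^2)
      = norm (C (Q x))^2 + (\<Sum>j=1..d. norm (Q (A j (Q x)))^2)"
  proof -
    have "(\<Sum>j=1..d. norm (Q (A j x))^2) = (\<Sum>j=1..d. norm (Q (A j (Q x)))^2)"
      by (rule sum.cong[OF refl], metis QA_Q)
    thus ?thesis using C_Q[of x] by simp
  qed
  also have "\<dots> \<le> norm (C (Q x))^2 + (\<Sum>j=1..d. norm (A j (Q x))^2)"
    using P.norm_le by (simp add: sum_mono)
  also have "\<dots> \<le> norm (Q x)^2" by (rule contr_ineq)
  finally show ?thesis .
qed

end


context psetup begin

lemma adjA_Q: "j \<in> {1..d} \<Longrightarrow> inner (adjoint (A j) (Q (A j x))) x = norm (Q (A j x))^2"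
  using adj_swap[OF blA] P.inner_self by (simp add: inner_commute)

lemma stein_form: "inner (Q x - (\<Sum>j=1..d. adjoint (A j) (Q (A j x)))) x
   = norm (Q x)^2 - (\<Sum>j=1..d. norm (Q (A j x))^2)"
proof -
  have "(\<Sum>j=1..d. inner (adjoint (A j) (Q (A j x))) x) = (\<Sum>j=1..d. norm (Q (A j x))^2)"
    by (rule sum.cong[OF refl]) (rule adjA_Q)
  thus ?thesis by (simp add: inner_diff_left inner_sum_left P.inner_self)
qed

lemma claim1: "op_le (\<lambda>x. adjoint C (C x)) (\<lambda>x. Q x - (\<Sum>j=1..d. adjoint (A j) (Q (A j x))))"
  unfolding op_le_def
proof
  fix x
  show "inner (adjoint C (C x)) x \<le> inner (Q x - (\<Sum>j=1..d. adjoint (A j) (Q (A j x)))) x"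
    unfolding stein_form adj_self[OF blC] using cl1[of x] by linarith
qed

lemma claimQ: "op_le Q id"
  unfolding op_le_def using P.norm_le by (simp add: P.inner_self power2_norm_eq_inner)

definition W :: "nat \<Rightarrow> nat list set" where "W N = {v. set v \<subseteq> {1..d} \<and> length v < N}"

lemma W_fin: "finite (W N)"
proof -
  have "W N \<subseteq> {v. set v \<subseteq> {1..d} \<and> length v \<le> N}" by (auto simp: W_def)
  thus ?thesis using finite_lists_length_le[of "{1..d}" N] finite_subset by blast
qed

lemma W_Suc: "W (Suc N) = insert [] ((\<lambda>(j,u). j # u) ` ({1..d} \<times> W N))"
proof (rule set_eqI)
  fix v show "v \<in> W (Suc N) \<longleftrightarrow> v \<in> insert [] ((\<lambda>(j,u). j # u) ` ({1..d} \<times> W N))"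
    by (cases v) (auto simp: W_def image_iff)
qed

lemma fin_bound: "(\<Sum>v\<in>W N. norm (C (word_pow A (rev v) x))^2) \<le> norm (Q x)^2"
proof (induction N arbitrary: x)
  case 0
  have "W 0 = {}" by (simp add: W_def)
  thus ?case by simp
next
  case (Suc N)
  have inj: "inj_on (\<lambda>(j,u). j # u) ({1..d} \<times> W N)" by (auto simp: inj_on_def)
  have nin: "[] \<notin> (\<lambda>(j,u). j # u) ` ({1..d} \<times> W N)" by auto
  have fin: "finite ((\<lambda>(j,u). j # u) ` ({1..d} \<times> W N))" using W_fin by simp
  have "(\<Sum>v\<in>W (Suc N). norm (C (word_pow A (rev v) x))^2)
      = norm (C x)^2 + (\<Sum>v\<in>(\<lambda>(j,u). j # u) ` ({1..d} \<times> W N). norm (C (word_pow A (rev v) x))^2)"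
    unfolding W_Suc using nin fin by simp
  also have "(\<Sum>v\<in>(\<lambda>(j,u). j # u) ` ({1..d} \<times> W N). norm (C (word_pow A (rev v) x))^2)
      = (\<Sum>(j,u)\<in>{1..d} \<times> W N. norm (C (word_pow A (rev u) (A j x)))^2)"
    by (subst sum.reindex[OF inj]) (simp add: word_pow_append case_prod_beta)
  also have "\<dots> = (\<Sum>j=1..d. \<Sum>u\<in>W N. norm (C (word_pow A (rev u) (A j x)))^2)"
    by (rule sum.cartesian_product[symmetric])
  also have "\<dots> \<le> (\<Sum>j=1..d. norm (Q (A j x))^2)"
    by (rule sum_mono) (rule Suc.IH)
  finally show ?case using cl1[of x] by linarith
qed

lemma finite_words_bound:
  assumes F: "finite F" "F \<subseteq> words d"
  shows "(\<Sum>v\<in>F. norm (C (word_pow A v x))^2) \<le> norm (Q x)^2"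
proof -
  define N where "N = Suc (Max (insert 0 (length ` F)))"
  have FW: "F \<subseteq> W N"
  proof
    fix v assume v: "v \<in> F"
    have "length v \<le> Max (insert 0 (length ` F))" using F v by (intro Max_ge) auto
    moreover have "set v \<subseteq> {1..d}" using v F by (auto simp: words_def)
    ultimately show "v \<in> W N" by (simp add: W_def N_def)
  qed
  have revW: "rev ` W N = W N"
  proof
    show "rev ` W N \<subseteq> W N" by (auto simp: W_def)
    show "W N \<subseteq> rev ` W N"
    proof
      fix v assume "v \<in> W N"
      hence "rev v \<in> W N" by (auto simp: W_def)
      thus "v \<in> rev ` W N" by (metis image_eqI rev_rev_ident)
    qed
  qed
  have "(\<Sum>v\<in>F. norm (C (word_pow A v x))^2) \<le> (\<Sum>v\<in>W N. norm (C (word_pow A v x))^2)"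
    by (rule sum_mono2[OF W_fin FW]) simp
  also have "\<dots> = (\<Sum>v\<in>rev ` W N. norm (C (word_pow A v x))^2)" using revW by simp
  also have "\<dots> = (\<Sum>v\<in>W N. norm (C (word_pow A (rev v) x))^2)"
    by (subst sum.reindex) (auto simp: inj_on_def)
  also have "\<dots> \<le> norm (Q x)^2" by (rule fin_bound)
  finally show ?thesis .
qed

lemma claimG: "op_le (gramian C A d) Q"
  unfolding op_le_def
proof
  fix x
  define f where "f v = adjoint (word_pow A v) (adjoint C (C (word_pow A v x)))" for v
  define g where "g v = norm (C (word_pow A v x))^2" for v
  have fg: "inner (f v) x = g v" if "v \<in> words d" for v
    unfolding f_def g_def adj_swap[OF blW[OF that]] adj_self[OF blC, symmetric]
    by (simp add: adj_swap[OF blC] adj[OF blC, symmetric] inner_commute)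
  have "inner (gramian C A d x) x \<le> norm (Q x)^2"
  proof (cases "f summable_on words d")
    case True
    hence "(f has_sum gramian C A d x) (words d)"
      unfolding gramian_def f_def[symmetric] by (rule has_sum_infsum)
    from has_sum_bounded_linear[OF bounded_linear_inner_left this]
    have "((\<lambda>v. inner (f v) x) has_sum inner (gramian C A d x) x) (words d)" .
    hence hs: "(g has_sum inner (gramian C A d x) x) (words d)"
      using has_sum_cong[of "words d" "\<lambda>v. inner (f v) x" g] fg by simp
    hence "inner (gramian C A d x) x = infsum g (words d)" by (simp add: infsumI)
    also have "\<dots> \<le> norm (Q x)^2"
      using hs by (intro infsum_le_finite_sums) (auto simp: summable_on_def g_def intro: finite_words_bound)
    finally show ?thesis .
  next
    case False
    hence "gramian C A d x = 0" unfolding gramian_def f_def[symmetric] by (rule infsum_not_exists)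
    thus ?thesis by simp
  qed
  thus "inner (gramian C A d x) x \<le> inner (Q x) x" by (simp add: P.inner_self)
qed

end


context psetup begin

definition D :: "'a \<Rightarrow> 'a" where
  "D x = x - adjoint C (C x) - (\<Sum>j=1..d. adjoint (A j) (A j x))"

lemma D_lin: "linear D"
proof -
  have l1: "linear (\<lambda>x. adjoint C (C x))"
    using linear_compose[OF bounded_linear.linear[OF blC] adj_linear[OF blC]] by (simp add: o_def)
  have l2: "\<forall>j\<in>{1..d}. linear (\<lambda>x. adjoint (A j) (A j x))"
    using linear_compose[OF bounded_linear.linear[OF blA] adj_linear[OF blA]] by (simp add: o_def)
  show ?thesis unfolding D_def[abs_def]
    by (intro linear_compose_sub bounded_linear.linear[OF bounded_linear_ident] l1 linear_compose_sum l2)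
qed

lemma D_form: "inner (D x) y = inner x y - inner (C x) (C y) - (\<Sum>j=1..d. inner (A j x) (A j y))"
proof -
  have "(\<Sum>j=1..d. inner (adjoint (A j) (A j x)) y) = (\<Sum>j=1..d. inner (A j x) (A j y))"
    by (rule sum.cong[OF refl]) (metis adj_swap blA inner_commute)
  thus ?thesis unfolding D_def
    by (simp add: inner_diff_left inner_sum_left adj_swap[OF blC] inner_commute[of "C y" "C x"])
qed

lemma D_sym: "inner (D x) y = inner x (D y)"
  by (simp add: D_form inner_commute[of x] inner_commute[of "D y"] inner_commute[of "C x"]
      inner_commute[of "A _ x"])

lemma D_pos: "inner (D x) x \<ge> 0"
  using contr_ineq[of x] by (simp add: D_form power2_norm_eq_inner)

lemma keyA:
  assumes eq: "norm (C m)^2 + (\<Sum>j=1..d. norm (Q (A j m))^2) = norm m ^2"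
  shows "(\<forall>j\<in>{1..d}. A j m = Q (A j m))"
    and "adjoint C (C m) + (\<Sum>j=1..d. adjoint (A j) (A j m)) = m"
proof -
  have nn: "\<forall>j\<in>{1..d}. 0 \<le> norm (A j m)^2 - norm (Q (A j m))^2" using P.norm_le by simp
  have "(\<Sum>j=1..d. norm (A j m)^2 - norm (Q (A j m))^2) \<le> 0"
    using contr_ineq[of m] eq by (simp add: sum_subtractf)
  moreover have "(\<Sum>j=1..d. norm (A j m)^2 - norm (Q (A j m))^2) \<ge> 0" by (rule sum_nonneg) (use nn in blast)
  ultimately have "(\<Sum>j=1..d. norm (A j m)^2 - norm (Q (A j m))^2) = 0" by simp
  hence z: "\<forall>j\<in>{1..d}. norm (A j m)^2 - norm (Q (A j m))^2 = 0"
  proof -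
    have "\<And>j. j \<in> {1..d} \<Longrightarrow> 0 \<le> norm (A j m)^2 - norm (Q (A j m))^2" using nn by blast
    from sum_nonneg_eq_0_iff[where A="{1..d}" and f="\<lambda>j. norm (A j m)^2 - norm (Q (A j m))^2", OF finite_atLeastAtMost this]
    show ?thesis
      using \<open>(\<Sum>j=1..d. norm (A j m)^2 - norm (Q (A j m))^2) = 0\<close> by blast
  qed
  show A1: "\<forall>j\<in>{1..d}. A j m = Q (A j m)"
  proof
    fix j assume j: "j \<in> {1..d}"
    have "norm (A j m - Q (A j m))^2 = 0" using P.pyth[of "A j m"] z j by simp
    thus "A j m = Q (A j m)" by simp
  qed
  have sq: "(\<Sum>j=1..d. norm (A j m)^2) = (\<Sum>j=1..d. norm (Q (A j m))^2)"
    by (rule sum.cong[OF refl]) (use A1 in metis)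
  have "inner (D m) m = 0"
    using eq sq by (simp add: D_form power2_norm_eq_inner)
  hence "D m = 0" by (rule psd_zero[OF D_lin D_sym D_pos])
  hence "m - adjoint C (C m) = (\<Sum>j=1..d. adjoint (A j) (A j m))" by (simp add: D_def)
  thus "adjoint C (C m) + (\<Sum>j=1..d. adjoint (A j) (A j m)) = m" by (metis add.commute diff_add_cancel)
qed

abbreviation "stein \<equiv> ((\<lambda>x. Q x - (\<Sum>j=1..d. adjoint (A j) (Q (A j x)))) = (\<lambda>x. adjoint C (C x)))"

lemma iso_form: "x \<in> M \<Longrightarrow> adjoint_on M C (C x) + (\<Sum>j=1..d. adjoint_on M (\<lambda>x. Q (A j x)) (Q (A j x)))
   = Q (adjoint C (C x) + (\<Sum>j=1..d. adjoint (A j) (Q (A j x))))"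
proof -
  have "(\<Sum>j=1..d. adjoint_on M (\<lambda>x. Q (A j x)) (Q (A j x))) = (\<Sum>j=1..d. Q (adjoint (A j) (Q (A j x))))"
    by (rule sum.cong[OF refl]) (simp add: P.adjoint_on_QT[OF blA] P.idem)
  thus ?thesis
    by (simp add: P.adjoint_on_Q[OF blC] linear_add[OF P.lin] linear_sum[OF P.lin])
qed

lemma stein_M: "stein \<Longrightarrow> m \<in> M \<Longrightarrow> norm (C m)^2 + (\<Sum>j=1..d. norm (Q (A j m))^2) = norm m ^2"
proof -
  assume st: stein and m: "m \<in> M"
  have "inner (Q m - (\<Sum>j=1..d. adjoint (A j) (Q (A j m)))) m = inner (adjoint C (C m)) m"
    using fun_cong[OF st, of m] by simp
  hence "norm (Q m)^2 - (\<Sum>j=1..d. norm (Q (A j m))^2) = norm (C m)^2"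
    by (simp only: stein_form adj_self[OF blC])
  thus ?thesis using P.fix_M[OF m] by simp
qed

lemma stein_iso: "stein \<Longrightarrow> isometric_pair_on M C (\<lambda>j x. Q (A j x)) d"
proof -
  assume st: stein
  show ?thesis unfolding isometric_pair_on_def
  proof (intro conjI ballI)
    fix j x show "Q (A j x) \<in> M" by (rule P.in_M)
  next
    fix x assume x: "x \<in> M"
    have e: "Q x - (\<Sum>j=1..d. adjoint (A j) (Q (A j x))) = adjoint C (C x)"
      using fun_cong[OF st, of x] by simp
    have "adjoint C (C x) + (\<Sum>j=1..d. adjoint (A j) (Q (A j x))) = Q x"
      unfolding e[symmetric] by simp
    thus "adjoint_on M C (C x) + (\<Sum>j=1..d. adjoint_on M (\<lambda>x. Q (A j x)) (Q (A j x))) = x"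
      using iso_form[OF x] P.idem P.fix_M[OF x] by simp
  qed
qed

definition S :: "'a \<Rightarrow> 'a" where
  "S x = Q x - (\<Sum>j=1..d. adjoint (A j) (Q (A j x))) - adjoint C (C x)"

lemma S_lin: "linear S"
proof -
  have l1: "linear (\<lambda>x. adjoint C (C x))"
    using linear_compose[OF bounded_linear.linear[OF blC] adj_linear[OF blC]] by (simp add: o_def)
  have l2: "\<forall>j\<in>{1..d}. linear (\<lambda>x. adjoint (A j) (Q (A j x)))"
  proof
    fix j assume j: "j \<in> {1..d}"
    have "linear (adjoint (A j) \<circ> (Q \<circ> A j))"
      by (intro linear_compose P.lin bounded_linear.linear[OF blA[OF j]] adj_linear[OF blA[OF j]])
    thus "linear (\<lambda>x. adjoint (A j) (Q (A j x)))" by (simp add: o_def)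
  qed
  show ?thesis unfolding S_def[abs_def]
    by (intro linear_compose_sub P.lin l1 linear_compose_sum l2)
qed

lemma S_K: "k \<in> K \<Longrightarrow> S k = 0"
proof -
  assume k: "k \<in> K"
  have "(\<Sum>j=1..d. adjoint (A j) (Q (A j k))) = 0"
  proof (rule sum.neutral, rule ballI)
    fix j assume j: "j \<in> {1..d}"
    show "adjoint (A j) (Q (A j k)) = 0"
      using Q_K[OF A_K[OF j k]] linear_0[OF adj_linear[OF blA[OF j]]] by simp
  qed
  thus ?thesis unfolding S_def using Q_K[OF k] C_K[OF k] linear_0[OF adj_linear[OF blC]] by simp
qed

lemma iso_stein: "isometric_pair_on M C (\<lambda>j x. Q (A j x)) d \<Longrightarrow> stein"
proof -
  assume iso: "isometric_pair_on M C (\<lambda>j x. Q (A j x)) d"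
  have SM: "S m = 0" if m: "m \<in> M" for m
  proof -
    define w where "w = adjoint C (C m) + (\<Sum>j=1..d. adjoint (A j) (Q (A j m)))"
    have Qw: "Q w = m" using iso m iso_form[OF m] by (simp add: isometric_pair_on_def w_def)
    have "inner w m = norm (C m)^2 + (\<Sum>j=1..d. norm (Q (A j m))^2)"
    proof -
      have "(\<Sum>j=1..d. inner (adjoint (A j) (Q (A j m))) m) = (\<Sum>j=1..d. norm (Q (A j m))^2)"
        by (rule sum.cong[OF refl]) (rule adjA_Q)
      thus ?thesis by (simp add: w_def inner_add_left inner_sum_left adj_self[OF blC])
    qed
    moreover have "inner w m = inner m m"
      using P.sym[of w m] Qw P.fix_M[OF m] by (simp add: inner_commute)
    ultimately have eq: "norm (C m)^2 + (\<Sum>j=1..d. norm (Q (A j m))^2) = norm m ^2"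
      by (simp add: power2_norm_eq_inner)
    have "(\<Sum>j=1..d. adjoint (A j) (Q (A j m))) = (\<Sum>j=1..d. adjoint (A j) (A j m))"
      by (rule sum.cong[OF refl]) (use keyA(1)[OF eq] in metis)
    thus "S m = 0" using keyA(2)[OF eq] P.fix_M[OF m] unfolding S_def
      by (simp add: algebra_simps)
  qed
  show stein
  proof (rule ext)
    fix x
    have "S x = S (x - Q x + Q x)" by simp
    also have "\<dots> = S (x - Q x) + S (Q x)" by (rule linear_add[OF S_lin])
    also have "\<dots> = 0" by (simp only: S_K[OF res_K] SM[OF P.in_M] add_0)
    finally have "S x = 0" .
    thus "Q x - (\<Sum>j=1..d. adjoint (A j) (Q (A j x))) = adjoint C (C x)"
      unfolding S_def by (rule eq_iff_diff_eq_0[THEN iffD2])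
  qed
qed

end

theorem proposition2p12:
  fixes C :: "'a::{real_inner,complete_space} \<Rightarrow> 'b::{real_inner,complete_space}"
    and A :: "nat \<Rightarrow> 'a \<Rightarrow> 'a" and d :: nat and Q :: "'a \<Rightarrow> 'a"
  assumes contr: "contractive_pair C A d"
    and Q: "orth_proj (orthogonal_comp (obs_kernel C A d)) Q"
  shows "(op_le (\<lambda>x. adjoint C (C x)) (\<lambda>x. Q x - (\<Sum>j=1..d. adjoint (A j) (Q (A j x))))) \<and>
    op_le (gramian C A d) Q \<and>
    op_le Q id \<and>
    (\<forall>x\<in>obs_kernel C A d. C x = 0) \<and>
    (\<forall>j\<in>{1..d}. \<forall>x\<in>obs_kernel C A d. A j x \<in> obs_kernel C A d) \<and>
    ((\<lambda>x. Q x - (\<Sum>j=1..d. adjoint (A j) (Q (A j x)))) = (\<lambda>x. adjoint C (C x))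
         \<longleftrightarrow> isometric_pair_on (orthogonal_comp (obs_kernel C A d)) C (\<lambda>j x. Q (A j x)) d) \<and>
    ((\<lambda>x. Q x - (\<Sum>j=1..d. adjoint (A j) (Q (A j x)))) = (\<lambda>x. adjoint C (C x))
         \<longrightarrow> (\<forall>j\<in>{1..d}. \<forall>x\<in>orthogonal_comp (obs_kernel C A d). A j x - Q (A j x) = 0))"
proof -
  interpret psetup C A d Q using contr Q by unfold_locales
  show ?thesis
  proof (intro conjI)
    show "op_le (\<lambda>x. adjoint C (C x)) (\<lambda>x. Q x - (\<Sum>j=1..d. adjoint (A j) (Q (A j x))))" by (rule claim1)
    show "op_le (gramian C A d) Q" by (rule claimG)
    show "op_le Q id" by (rule claimQ)
    show "\<forall>x\<in>obs_kernel C A d. C x = 0" using C_K by blast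
    show "\<forall>j\<in>{1..d}. \<forall>x\<in>obs_kernel C A d. A j x \<in> obs_kernel C A d" using A_K by blast
    show "stein \<longleftrightarrow> isometric_pair_on M C (\<lambda>j x. Q (A j x)) d" using stein_iso iso_stein by blast
    show "stein \<longrightarrow> (\<forall>j\<in>{1..d}. \<forall>x\<in>M. A j x - Q (A j x) = 0)"
      using keyA(1)[OF stein_M] by auto
  qed
qed


end
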